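(* Every unweighted instance $(H,U,k)$ of the atomic two-stage facility location game (i.e. $w(v)=1$ for all $v\in V$; the feasibility sets $U(f)$ may be arbitrary) admits a subgame perfect equilibrium $(\mathbf{s},\sigma)$ in which the full client profile $\sigma$ is a full client equilibrium consisting of pure client profiles (i.e. $\sigma(\mathbf{s}')_{v,f}\in\{0,1\}$ for all FPPs $\mathbf{s}'$, clients $v$ and facilities $f$).
   Context: Atomic two-stage facility location game. An instance is a triple $(H,U,k)$: $H=(V,E,w)$ is a finite directed graph with vertex weights $w:V\to\mathbb{Q}_{>0}$; $F$ is a set of $k$ facility agents; $U:F\to 2^V$ assigns to each facility agent $f$ a set $U(f)\subseteq V$ of feasible locations. The vertices are simultaneously the clients and the possible locations. The instance is unweighted if $w(v)=1$ for all $v$. A facility placement profile (FPP) is a vector $\mathbf{s}=(s_f)_{f\in F}$ with $s_f\in U(f)$ (several facilities may choose the same vertex); $S$ denotes the set of all FPPs. For a client $v$ let $N(v)=\{v\}\cup\{u:(v,u)\in E\}$ and $N_{\mathbf{s}}(v)=\{f\in F: s_f\in N(v)\}$. A client profile for $\mathbf{s}$ is $\sigma(\mathbf{s})$, assigning to each client $v$ numbers $\sigma(\mathbf{s})_{v,f}\in[0,1]$ ($f\in F$) with $\sigma(\mathbf{s})_{v,f}=0$ for $f\notin N_{\mathbf{s}}(v)$ and $\sum_{f\in N_{\mathbf{s}}(v)}\sigma(\mathbf{s})_{v,f}=1$ whenever $N_{\mathbf{s}}(v)\neq\varnothing$ (a probability distribution over available facilities). A full client profile $\sigma$ specifies a client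 profile $\sigma(\mathbf{s}')$ for every $\mathbf{s}'\in S$. The load of facility $f$ is $\ell_f(\mathbf{s},\sigma)=\sum_{v\in V}\sigma(\mathbf{s})_{v,f}w(v)$. The cost of client $v$ is $L_v(\mathbf{s},\sigma)=w(v)+\sum_{f\in N_{\mathbf{s}}(v)}\sigma(\mathbf{s})_{v,f}\,\ell_{-v,f}(\mathbf{s},\sigma)$ where $\ell_{-v,f}(\mathbf{s},\sigma)=\sum_{u\neq v}\sigma(\mathbf{s})_{u,f}w(u)$. $\sigma(\mathbf{s})$ is a client equilibrium if no client $v$ can strictly decrease $L_v$ by unilaterally changing her own distribution to another feasible one; $\sigma$ is a full client equilibrium if $\sigma(\mathbf{s}')$ is a client equilibrium for every $\mathbf{s}'\in S$. A pair $(\mathbf{s},\sigma)$ is a subgame perfect equilibrium (SPE) if $\sigma$ is a full client equilibrium and there is no facility $f$ and location $s'_f\in U(f)$ with $\ell_f((s'_f,\mathbf{s}_{-f}),\sigma)>\ell_f(\mathbf{s},\sigma)$. *)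

theory Defs
  imports Complex_Main "HOL-Library.FuncSet"
begin

text \<open>Graph H = (V,E,w); facility agents F (k = card F); feasibility sets U. A (full) client profile gives,
  for each client v and facility f, the probability sigma s v f.\<close>

definition nbhd :: "('v \<times> 'v) set \<Rightarrow> 'v \<Rightarrow> 'v set" where
  "nbhd E v = {v} \<union> {u. (v, u) \<in> E}"

definition FPPs :: "'f set \<Rightarrow> ('f \<Rightarrow> 'v set) \<Rightarrow> ('f \<Rightarrow> 'v) set" where
  "FPPs F U = PiE F U"

definition avail :: "('v \<times> 'v) set \<Rightarrow> 'f set \<Rightarrow> ('f \<Rightarrow> 'v) \<Rightarrow> 'v \<Rightarrow> 'f set" where
  "avail E F s v = {f \<in> F. s f \<in> nbhd E v}"

definition feasible_dist ::
  "('v \<times> 'v) set \<Rightarrow> 'f set \<Rightarrow> ('f \<Rightarrow> 'v) \<Rightarrow> 'v \<Rightarrow> ('f \<Rightarrow> real) \<Rightarrow> bool" where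
  "feasible_dist E F s v d \<longleftrightarrow>
     (\<forall>f\<in>F. 0 \<le> d f \<and> d f \<le> 1) \<and>
     (\<forall>f\<in>F. f \<notin> avail E F s v \<longrightarrow> d f = 0) \<and>
     (avail E F s v \<noteq> {} \<longrightarrow> (\<Sum>f\<in>avail E F s v. d f) = 1)"

definition client_profile ::
  "'v set \<Rightarrow> ('v \<times> 'v) set \<Rightarrow> 'f set \<Rightarrow> ('f \<Rightarrow> 'v) \<Rightarrow> ('v \<Rightarrow> 'f \<Rightarrow> real) \<Rightarrow> bool" where
  "client_profile V E F s p \<longleftrightarrow> (\<forall>v\<in>V. feasible_dist E F s v (p v))"

definition load :: "'v set \<Rightarrow> ('v \<Rightarrow> real) \<Rightarrow> ('v \<Rightarrow> 'f \<Rightarrow> real) \<Rightarrow> 'f \<Rightarrow> real" where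
  "load V w p f = (\<Sum>v\<in>V. p v f * w v)"

definition load_minus :: "'v set \<Rightarrow> ('v \<Rightarrow> real) \<Rightarrow> ('v \<Rightarrow> 'f \<Rightarrow> real) \<Rightarrow> 'v \<Rightarrow> 'f \<Rightarrow> real" where
  "load_minus V w p v f = (\<Sum>u\<in>V - {v}. p u f * w u)"

definition client_cost ::
  "'v set \<Rightarrow> ('v \<times> 'v) set \<Rightarrow> 'f set \<Rightarrow> ('v \<Rightarrow> real) \<Rightarrow> ('f \<Rightarrow> 'v) \<Rightarrow> ('v \<Rightarrow> 'f \<Rightarrow> real) \<Rightarrow> 'v \<Rightarrow> real" where
  "client_cost V E F w s p v = w v + (\<Sum>f\<in>avail E F s v. p v f * load_minus V w p v f)"

definition client_eq ::
  "'v set \<Rightarrow> ('v \<times> 'v) set \<Rightarrow> 'f set \<Rightarrow> ('v \<Rightarrow> real) \<Rightarrow> ('f \<Rightarrow> 'v) \<Rightarrow> ('v \<Rightarrow> 'f \<Rightarrow> real) \<Rightarrow> bool" where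
  "client_eq V E F w s p \<longleftrightarrow> client_profile V E F s p \<and>
     (\<forall>v\<in>V. \<forall>d. feasible_dist E F s v d \<longrightarrow>
        client_cost V E F w s p v \<le> client_cost V E F w s (p(v := d)) v)"

definition full_client_eq ::
  "'v set \<Rightarrow> ('v \<times> 'v) set \<Rightarrow> 'f set \<Rightarrow> ('f \<Rightarrow> 'v set) \<Rightarrow> ('v \<Rightarrow> real)
   \<Rightarrow> (('f \<Rightarrow> 'v) \<Rightarrow> 'v \<Rightarrow> 'f \<Rightarrow> real) \<Rightarrow> bool" where
  "full_client_eq V E F U w \<sigma> \<longleftrightarrow> (\<forall>s'\<in>FPPs F U. client_eq V E F w s' (\<sigma> s'))"

definition is_SPE ::
  "'v set \<Rightarrow> ('v \<times> 'v) set \<Rightarrow> 'f set \<Rightarrow> ('f \<Rightarrow> 'v set) \<Rightarrow> ('v \<Rightarrow> real)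
   \<Rightarrow> ('f \<Rightarrow> 'v) \<Rightarrow> (('f \<Rightarrow> 'v) \<Rightarrow> 'v \<Rightarrow> 'f \<Rightarrow> real) \<Rightarrow> bool" where
  "is_SPE V E F U w s \<sigma> \<longleftrightarrow> s \<in> FPPs F U \<and> full_client_eq V E F U w \<sigma> \<and>
     (\<forall>f\<in>F. \<forall>x\<in>U f. \<not> (load V w (\<sigma> (s(f := x))) f > load V w (\<sigma> s) f))"

definition pure_full_profile ::
  "'v set \<Rightarrow> 'f set \<Rightarrow> ('f \<Rightarrow> 'v set) \<Rightarrow> (('f \<Rightarrow> 'v) \<Rightarrow> 'v \<Rightarrow> 'f \<Rightarrow> real) \<Rightarrow> bool" where
  "pure_full_profile V F U \<sigma> \<longleftrightarrow>
     (\<forall>s'\<in>FPPs F U. \<forall>v\<in>V. \<forall>f\<in>F. \<sigma> s' v f \<in> {0, 1})"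

end

theory Submission
  imports Defs "HOL-Library.List_Lexorder"
begin


lemma relpow_avoid:
  "(a,b) \<in> (R::('a\<times>'a) set)^^k \<Longrightarrow> (a,b) \<in> {(x,y). (x,y)\<in>R \<and> x \<noteq> b}^^k \<or> (\<exists>j<k. (a,b) \<in> R^^j)"
proof (induction k arbitrary: a)
  case 0
  then show ?case by simp
next
  case (Suc k)
  from relpow_Suc_D2[OF Suc.prems] obtain c where ac: "(a,c) \<in> R" and cb: "(c,b) \<in> R^^k" by blast
  show ?case
  proof (cases "a = b")
    case True
    then show ?thesis by (intro disjI2 exI[of _ 0]) auto
  next
    case False
    from Suc.IH[OF cb] show ?thesis
    proof
      assume "(c, b) \<in> {(x,y). (x,y)\<in>R \<and> x \<noteq> b} ^^ k"
      then show ?thesis using ac False by (intro disjI1 relpow_Suc_I2) auto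
    next
      assume "\<exists>j<k. (c, b) \<in> R ^^ j"
      then obtain j where "j < k" "(c,b) \<in> R^^j" by blast
      moreover have "(a,b) \<in> R^^Suc j" using ac \<open>(c,b) \<in> R^^j\<close> by (rule relpow_Suc_I2)
      ultimately show ?thesis by (intro disjI2 exI[of _ "Suc j"]) auto
    qed
  qed
qed

lemma relpow_mono': "(R::(('a \<times> 'a) set)) \<subseteq> S \<Longrightarrow> (a,b) \<in> R^^k \<Longrightarrow> (a,b) \<in> S^^k"
proof (induction k arbitrary: b)
  case 0
  then show ?case by (auto elim: relpow_0_E)
next
  case (Suc k)
  then obtain c where "(a,c) \<in> R^^k" "(c,b) \<in> R" by (auto elim: relpow_Suc_E)
  then show ?case using Suc by (meson relpow_Suc_I subsetD)
qed

lemma list_less_by_index: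
  fixes T1 T2 :: "nat \<Rightarrow> nat"
  assumes "t < n" "\<forall>j<t. T1 j = T2 j" "T1 t < T2 t"
  shows "map T1 [0..<n] < map T2 [0..<n]"
proof -
  have "take t (map T1 [0..<n]) = take t (map T2 [0..<n])"
    using assms(1,2) by (simp add: take_map)
  then show ?thesis using assms unfolding list_less_def lexord_take_index_conv
    by (intro disjI2 exI[of _ t]) auto
qed

lemma list_less_by_dom:
  fixes T1 T2 :: "nat \<Rightarrow> nat"
  assumes "m < n" "\<forall>j\<le>m. T1 j \<le> T2 j" "T1 m < T2 m"
  shows "map T1 [0..<n] < map T2 [0..<n]"
proof -
  define t where "t = (LEAST j. T1 j \<noteq> T2 j)"
  have ex: "T1 m \<noteq> T2 m" using assms by simp
  have "T1 t \<noteq> T2 t" unfolding t_def by (rule LeastI[of _ m]) (use ex in auto)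
  moreover have "t \<le> m" unfolding t_def by (rule Least_le) (use ex in auto)
  moreover have "\<forall>j<t. T1 j = T2 j" unfolding t_def using not_less_Least by blast
  ultimately show ?thesis using assms
    by (intro list_less_by_index[of t]) force+
qed

definition Tv :: "'f set \<Rightarrow> ('f \<Rightarrow> nat) \<Rightarrow> nat \<Rightarrow> nat" where
  "Tv F L t = (\<Sum>g\<in>F. min (L g) t)"

lemma Tv_split:
  assumes "finite F" "g1 \<in> F" "g2 \<in> F" "g1 \<noteq> g2"
  shows "Tv F L t = min (L g1) t + min (L g2) t + (\<Sum>g\<in>F-{g1}-{g2}. min (L g) t)"
proof -
  have "Tv F L t = min (L g1) t + (\<Sum>g\<in>F-{g1}. min (L g) t)"
    unfolding Tv_def using assms by (simp add: sum.remove)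
  also have "(\<Sum>g\<in>F-{g1}. min (L g) t) = min (L g2) t + (\<Sum>g\<in>F-{g1}-{g2}. min (L g) t)"
    using assms by (subst sum.remove[of _ g2]) auto
  finally show ?thesis by simp
qed

lemma Tv_move:
  assumes "finite F" "g1 \<in> F" "g2 \<in> F" "g1 \<noteq> g2"
    and L': "\<And>g. L' g = (if g = g1 then L g - 1 else if g = g2 then Suc (L g) else L g)"
  shows "L g1 \<ge> L g2 + 2 \<Longrightarrow> (\<forall>j<Suc (L g2). Tv F L j = Tv F L' j) \<and> Tv F L (Suc (L g2)) < Tv F L' (Suc (L g2))"
    and "L g1 = Suc (L g2) \<Longrightarrow> Tv F L' = Tv F L"
proof -
  have rest: "(\<Sum>g\<in>F-{g1}-{g2}. min (L' g) t) = (\<Sum>g\<in>F-{g1}-{g2}. min (L g) t)" for t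
    by (rule sum.cong) (auto simp: L')
  have sp: "Tv F L' t = min (L g1 - 1) t + min (Suc (L g2)) t + (\<Sum>g\<in>F-{g1}-{g2}. min (L g) t)" for t
    using Tv_split[OF assms(1-4), of L' t] rest[of t] assms(4) by (simp add: L')
  note sp0 = Tv_split[OF assms(1-4), of L]
  { assume "L g1 \<ge> L g2 + 2"
    then show "(\<forall>j<Suc (L g2). Tv F L j = Tv F L' j) \<and> Tv F L (Suc (L g2)) < Tv F L' (Suc (L g2))"
      unfolding sp sp0 by auto }
  { assume "L g1 = Suc (L g2)"
    then show "Tv F L' = Tv F L"
      by (intro ext) (simp add: sp sp0) }
qed



locale game =
  fixes V :: "'v set" and E :: "('v \<times> 'v) set" and F :: "'f set" and U :: "'f \<Rightarrow> 'v set"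
  assumes finV: "finite V" and finF: "finite F"
begin

definition cov :: "('f \<Rightarrow> 'v) \<Rightarrow> 'v \<Rightarrow> bool" where
  "cov s v \<longleftrightarrow> avail E F s v \<noteq> {}"

definition valid :: "('f \<Rightarrow> 'v) \<Rightarrow> ('v \<Rightarrow> 'f) \<Rightarrow> bool" where
  "valid s a \<longleftrightarrow> (\<forall>v\<in>V. cov s v \<longrightarrow> a v \<in> avail E F s v)"

definition ld :: "('f \<Rightarrow> 'v) \<Rightarrow> ('v \<Rightarrow> 'f) \<Rightarrow> 'f \<Rightarrow> nat" where
  "ld s a g = card {v\<in>V. cov s v \<and> a v = g}"

definition key :: "('f \<Rightarrow> 'v) \<Rightarrow> ('v \<Rightarrow> 'f) \<Rightarrow> nat list" where
  "key s a = map (Tv F (ld s a)) [0..<Suc (card V)]"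

definition sig :: "('f \<Rightarrow> 'v) \<Rightarrow> ('v \<Rightarrow> 'f) \<Rightarrow> 'v \<Rightarrow> 'f \<Rightarrow> real" where
  "sig s a v g = (if cov s v \<and> a v = g then 1 else 0)"

definition eqp :: "('f \<Rightarrow> 'v) \<Rightarrow> ('v \<Rightarrow> 'f) \<Rightarrow> bool" where
  "eqp s a \<longleftrightarrow> valid s a \<and>
     (\<forall>v\<in>V. cov s v \<longrightarrow> (\<forall>h\<in>avail E F s v. ld s a (a v) \<le> ld s a h + 1))"

lemma avail_sub: "avail E F s v \<subseteq> F"
  unfolding avail_def by auto

lemma finite_avail: "finite (avail E F s v)"
  using finF avail_sub finite_subset by blast

lemma ld_le: "ld s a g \<le> card V"
  unfolding ld_def using finV by (intro card_mono) auto

lemma ld_move: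
  assumes "valid s a" "v \<in> V" "cov s v" "h \<in> avail E F s v" "h \<noteq> a v"
  shows "valid s (a(v:=h))"
    and "ld s (a(v:=h)) g = (if g = a v then ld s a g - 1 else if g = h then Suc (ld s a g) else ld s a g)"
    and "ld s a (a v) \<ge> 1"
proof -
  show "valid s (a(v:=h))" using assms unfolding valid_def by auto
  let ?S = "\<lambda>b g. {u\<in>V. cov s u \<and> b u = g}"
  have fin: "finite (?S b g)" for b g using finV by auto
  have "v \<in> ?S a (a v)" using assms by auto
  then show "ld s a (a v) \<ge> 1" unfolding ld_def using fin
    by (metis One_nat_def Suc_leI card_gt_0_iff empty_iff)
  show "ld s (a(v:=h)) g = (if g = a v then ld s a g - 1 else if g = h then Suc (ld s a g) else ld s a g)"
  proof (cases "g = a v")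
    case True
    then have "?S (a(v:=h)) g = ?S a g - {v}" using assms by auto
    then show ?thesis using True fin \<open>v \<in> ?S a (a v)\<close> unfolding ld_def by (simp add: card_Diff_singleton)
  next
    case False
    show ?thesis
    proof (cases "g = h")
      case True
      then have e: "?S (a(v:=h)) g = insert v (?S a g)" using assms by auto
      have n: "v \<notin> ?S a g" using True assms by auto
      have "card (?S (a(v:=h)) g) = Suc (card (?S a g))"
        unfolding e by (rule card_insert_disjoint[OF fin n])
      then show ?thesis using True False unfolding ld_def by simp
    next
      case False2: False
      then have "?S (a(v:=h)) g = ?S a g" using False by auto
      then show ?thesis using False False2 unfolding ld_def by simp
    qed
  qed
qed

lemma move_improves:
  assumes "valid s a" "v \<in> V" "cov s v" "h \<in> avail E F s v" "ld s a (a v) \<ge> ld s a h + 2"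
  shows "key s a < key s (a(v:=h))"
proof -
  have hne: "h \<noteq> a v" using assms(5) by auto
  have inF: "a v \<in> F" "h \<in> F" using assms avail_sub unfolding valid_def by auto
  note mv = ld_move[OF assms(1-4) hne]
  have T: "(\<forall>j<Suc (ld s a h). Tv F (ld s a) j = Tv F (ld s (a(v:=h))) j) \<and>
      Tv F (ld s a) (Suc (ld s a h)) < Tv F (ld s (a(v:=h))) (Suc (ld s a h))"
    by (rule Tv_move(1)[OF finF inF hne[symmetric] mv(2) assms(5)])
  have "Suc (ld s a h) < Suc (card V)" using ld_le[of s a "a v"] assms(5) by linarith
  then show ?thesis unfolding key_def by (rule list_less_by_index[of "Suc (ld s a h)"]) (use T in auto)
qed

lemma max_is_eqp:
  assumes "valid s a" "\<forall>b. valid s b \<longrightarrow> key s b \<le> key s a"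
  shows "eqp s a"
  unfolding eqp_def
proof (intro conjI assms(1) ballI impI)
  fix v h assume v: "v \<in> V" "cov s v" and h: "h \<in> avail E F s v"
  show "ld s a (a v) \<le> ld s a h + 1"
  proof (rule ccontr)
    assume "\<not> ?thesis"
    then have "key s a < key s (a(v:=h))" using move_improves[OF assms(1) v h] by simp
    moreover have "valid s (a(v:=h))" using assms(1) v h unfolding valid_def by auto
    ultimately show False using assms(2) by (meson leD)
  qed
qed

end



context game
begin

lemma sum_sig: assumes that: "finite W" shows "(\<Sum>u\<in>W. sig s a u g) = real (card {u\<in>W. cov s u \<and> a u = g})"
proof -
  have "(\<Sum>u\<in>W. sig s a u g) = (\<Sum>u\<in>W. if cov s u \<and> a u = g then (1::real) else 0)"
    by (simp add: sig_def)
  also have "\<dots> = (\<Sum>u\<in>{u\<in>W. cov s u \<and> a u = g}. 1)"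
    using that by (rule sum.inter_filter[symmetric])
  finally show ?thesis by simp
qed

lemma load_sig: "load V (\<lambda>_. 1) (sig s a) g = real (ld s a g)"
  unfolding load_def ld_def using sum_sig[OF finV] by simp

lemma lm_sig:
  assumes "v \<in> V" and that: "\<And>u. u \<noteq> v \<Longrightarrow> p u = sig s a u"
  shows "load_minus V (\<lambda>_. 1) p v g = real (ld s a g) - sig s a v g"
proof -
  have "load_minus V (\<lambda>_. 1) p v g = (\<Sum>u\<in>V-{v}. sig s a u g)"
    unfolding load_minus_def using that by (intro sum.cong) auto
  also have "\<dots> = (\<Sum>u\<in>V. sig s a u g) - sig s a v g"
    using finV assms by (simp add: sum_diff1)
  also have "\<dots> = real (ld s a g) - sig s a v g"
    using sum_sig[OF finV] unfolding ld_def by simp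
  finally show ?thesis .
qed

lemma sig_feasible:
  assumes "valid s a" "v \<in> V"
  shows "feasible_dist E F s v (sig s a v)"
  unfolding feasible_dist_def
proof (intro conjI ballI impI)
  fix g assume "g \<in> F" "g \<notin> avail E F s v"
  then show "sig s a v g = 0" using assms unfolding sig_def valid_def by auto
next
  assume ne: "avail E F s v \<noteq> {}"
  then have "a v \<in> avail E F s v" using assms unfolding valid_def cov_def by auto
  then show "(\<Sum>g\<in>avail E F s v. sig s a v g) = 1"
    unfolding sig_def using ne finite_avail by (simp add: cov_def sum.delta)
qed (auto simp: sig_def)

lemma eqp_client_eq:
  assumes "eqp s a"
  shows "client_eq V E F (\<lambda>_. 1) s (sig s a)"
  unfolding client_eq_def client_profile_def
proof (intro conjI ballI allI impI)
  fix v assume "v \<in> V"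
  then show "feasible_dist E F s v (sig s a v)" using assms sig_feasible unfolding eqp_def by blast
next
  fix v d assume v: "v \<in> V" and d: "feasible_dist E F s v d"
  show "client_cost V E F (\<lambda>_. 1) s (sig s a) v \<le> client_cost V E F (\<lambda>_. 1) s ((sig s a)(v := d)) v"
  proof (cases "cov s v")
    case False
    then show ?thesis unfolding client_cost_def cov_def by simp
  next
    case True
    have av: "a v \<in> avail E F s v" using assms True v unfolding eqp_def valid_def by auto
    have lm1: "load_minus V (\<lambda>_. 1) (sig s a) v g = real (ld s a g) - sig s a v g" for g
      by (rule lm_sig[OF v]) simp
    have lm2: "load_minus V (\<lambda>_. 1) ((sig s a)(v := d)) v g = real (ld s a g) - sig s a v g" for g
      by (rule lm_sig[OF v]) simp
    have c1: "client_cost V E F (\<lambda>_. 1) s (sig s a) v = 1 + (real (ld s a (a v)) - 1)"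
    proof -
      have "(\<Sum>g\<in>avail E F s v. sig s a v g * load_minus V (\<lambda>_. 1) (sig s a) v g)
          = (\<Sum>g\<in>avail E F s v. if a v = g then real (ld s a (a v)) - 1 else 0)"
        using True unfolding lm1 by (intro sum.cong) (auto simp: sig_def)
      also have "\<dots> = real (ld s a (a v)) - 1" using av finite_avail by (simp add: sum.delta)
      finally show ?thesis unfolding client_cost_def by simp
    qed
    have lb: "real (ld s a (a v)) - 1 \<le> real (ld s a g) - sig s a v g" if "g \<in> avail E F s v" for g
    proof (cases "g = a v")
      case True
      then show ?thesis using \<open>cov s v\<close> by (simp add: sig_def)
    next
      case False
      then have "ld s a (a v) \<le> ld s a g + 1" using assms True v that unfolding eqp_def by auto
      then show ?thesis using False by (simp add: sig_def)
    qed
    have dsum: "(\<Sum>g\<in>avail E F s v. d g) = 1" and dnn: "\<And>g. g \<in> avail E F s v \<Longrightarrow> d g \<ge> 0"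
      using d True avail_sub unfolding feasible_dist_def cov_def by auto
    have "real (ld s a (a v)) - 1 = (\<Sum>g\<in>avail E F s v. d g * (real (ld s a (a v)) - 1))"
      using dsum by (simp add: sum_distrib_right[symmetric])
    also have "\<dots> \<le> (\<Sum>g\<in>avail E F s v. d g * load_minus V (\<lambda>_. 1) ((sig s a)(v := d)) v g)"
      unfolding lm2 by (intro sum_mono mult_left_mono lb dnn)
    finally have X: "real (ld s a (a v)) - 1 \<le> (\<Sum>g\<in>avail E F s v. d g * load_minus V (\<lambda>_. 1) ((sig s a)(v := d)) v g)" .
    show ?thesis using c1 X unfolding client_cost_def by simp
  qed
qed

end



context game
begin

definition Kset :: "('f \<Rightarrow> 'v) \<Rightarrow> nat list set" where
  "Kset s = {key s a | a. valid s a}"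

definition Qset :: "('f \<Rightarrow> 'v) \<Rightarrow> ('v \<Rightarrow> 'f) set" where
  "Qset s = {a. valid s a \<and> key s a = Max (Kset s)}"

definition Eq :: "('f \<Rightarrow> 'v) \<Rightarrow> ('v \<Rightarrow> 'f) \<Rightarrow> ('f \<times> 'f) set" where
  "Eq s q = {(g,h). \<exists>v\<in>V. cov s v \<and> q v = g \<and> h \<in> avail E F s v}"

lemma valid_ex: "\<exists>a. valid s a"
  by (rule exI[of _ "\<lambda>v. SOME g. g \<in> avail E F s v"]) (auto simp: valid_def cov_def intro: someI_ex)

lemma key_in: "key s a \<in> {xs. set xs \<subseteq> {..card F * card V} \<and> length xs = Suc (card V)}"
proof -
  have "Tv F (ld s a) t \<le> card F * card V" for t
  proof -
    have "Tv F (ld s a) t \<le> (\<Sum>g\<in>F. card V)" unfolding Tv_def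
      by (intro sum_mono) (metis ld_le min.coboundedI1)
    then show ?thesis by simp
  qed
  then show ?thesis unfolding key_def by auto
qed

lemma finite_keys: "finite {key s a | s a. P s a}"
  by (rule finite_subset[OF _ finite_lists_length_eq[of "{..card F * card V}" "Suc (card V)"]])
     (use key_in in auto)

lemma Kset_fin: "finite (Kset s)" and Kset_ne: "Kset s \<noteq> {}"
proof -
  show "finite (Kset s)" unfolding Kset_def using finite_keys[of "\<lambda>s' a. s' = s \<and> valid s a"]
    by (rule finite_subset[rotated]) auto
  show "Kset s \<noteq> {}" using valid_ex[of s] unfolding Kset_def by auto
qed

lemma Qset_ne: "Qset s \<noteq> {}"
proof -
  have "Max (Kset s) \<in> Kset s" using Kset_fin Kset_ne by (rule Max_in)
  then show ?thesis unfolding Qset_def Kset_def by auto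
qed

lemma Qset_max: "a \<in> Qset s \<Longrightarrow> valid s b \<Longrightarrow> key s b \<le> key s a"
  unfolding Qset_def using Kset_fin by (auto simp: Kset_def intro!: Max_ge)

lemma Qset_eqp: "a \<in> Qset s \<Longrightarrow> eqp s a"
  using Qset_max by (intro max_is_eqp) (auto simp: Qset_def)

lemma reach_load:
  assumes mmin: "\<forall>b\<in>Qset s. m \<le> ld s b f"
  shows "q \<in> Qset s \<Longrightarrow> ld s q f = m \<Longrightarrow> (f,g) \<in> (Eq s q)^^n \<Longrightarrow> m \<le> ld s q g"
proof (induction n arbitrary: q g rule: less_induct)
  case (less n)
  show ?case
  proof (cases n)
    case 0
    then show ?thesis using less.prems by (auto elim: relpow_0_E)
  next
    case (Suc k)
    from less.prems(3) obtain g' where p1: "(f,g') \<in> (Eq s q)^^k" and p2: "(g',g) \<in> Eq s q"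
      unfolding Suc by (auto elim: relpow_Suc_E)
    have IHg': "m \<le> ld s q g'" using less.IH[of k q g'] Suc less.prems p1 by auto
    show ?thesis
    proof (rule ccontr)
      assume lt: "\<not> m \<le> ld s q g"
      from p2 obtain v where v: "v \<in> V" "cov s v" "q v = g'" "g \<in> avail E F s v"
        unfolding Eq_def by auto
      have eq: "eqp s q" using Qset_eqp less.prems(1) by blast
      then have "ld s q g' \<le> ld s q g + 1" using v unfolding eqp_def by auto
      then have gg: "ld s q g' = Suc (ld s q g)" using lt IHg' by linarith
      then have neq: "g \<noteq> g'" by auto
      have vq: "valid s q" using eq unfolding eqp_def by auto
      define q2 where "q2 = q(v := g)"
      note mv = ld_move[OF vq v(1,2,4), unfolded v(3), OF neq, folded q2_def]
      have inF: "g' \<in> F" "g \<in> F" using vq v avail_sub unfolding valid_def by auto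
      have "Tv F (ld s q2) = Tv F (ld s q)"
        by (rule Tv_move(2)[OF finF inF neq[symmetric] mv(2) gg])
      then have "key s q2 = key s q" unfolding key_def by simp
      then have q2Q: "q2 \<in> Qset s" using mv(1) less.prems(1) unfolding Qset_def by auto
      show False
      proof (cases "g' = f")
        case True
        then have "ld s q2 f < m" using mv(2) less.prems(2) gg by auto
        then show False using mmin q2Q by fastforce
      next
        case False
        have gf: "g \<noteq> f" using lt less.prems(2) by auto
        have q2f: "ld s q2 f = m" using mv(2) False gf less.prems(2) by auto
        have q2g': "ld s q2 g' < m" using mv(2) gg IHg' lt by auto
        from relpow_avoid[OF p1] show False
        proof
          assume r: "(f, g') \<in> {(x,y). (x,y) \<in> Eq s q \<and> x \<noteq> g'} ^^ k"
          have "{(x,y). (x,y) \<in> Eq s q \<and> x \<noteq> g'} \<subseteq> Eq s q2"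
            unfolding Eq_def q2_def using v(3) by fastforce
          from relpow_mono'[OF this r] have "(f,g') \<in> (Eq s q2)^^k" .
          then have "m \<le> ld s q2 g'" using less.IH[of k q2 g'] Suc q2Q q2f by auto
          then show False using q2g' by simp
        next
          assume "\<exists>j<k. (f, g') \<in> Eq s q ^^ j"
          then obtain j where j: "j < k" "(f, g') \<in> Eq s q ^^ j" by blast
          have "(f,g) \<in> (Eq s q)^^Suc j" by (rule relpow_Suc_I[OF j(2) p2])
          then have "m \<le> ld s q g" using less.IH[of "Suc j" q g] Suc j less.prems by auto
          then show False using lt by simp
        qed
      qed
    qed
  qed
qed

lemma avail_upd: "g \<noteq> f \<Longrightarrow> g \<in> avail E F (s0(f:=x)) v \<longleftrightarrow> g \<in> avail E F s0 v"
  unfolding avail_def by auto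

lemma dev_ok:
  assumes glob: "\<And>s b. s \<in> FPPs F U \<Longrightarrow> valid s b \<Longrightarrow> key s b \<le> key s0 a0"
    and va0: "valid s0 a0" and fF: "f \<in> F" and s'def: "s' = s0(f:=x)" and s'F: "s' \<in> FPPs F U"
    and qQ: "q \<in> Qset s'" and qmin: "\<forall>b\<in>Qset s'. ld s' q f \<le> ld s' b f"
  shows "ld s' q f \<le> ld s0 a0 f"
proof (rule ccontr)
  assume A: "\<not> ld s' q f \<le> ld s0 a0 f"
  define m where "m = ld s' q f"
  have lm: "ld s0 a0 f < m" using A m_def by simp
  define R where "R = {g. (f,g) \<in> (Eq s' q)^*}"
  have fR: "f \<in> R" unfolding R_def by simp
  have Rload: "m \<le> ld s' q g" if "g \<in> R" for g
  proof -
    have "(f,g) \<in> (Eq s' q)^*" using that unfolding R_def by simp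
    then obtain n where n: "(f,g) \<in> (Eq s' q)^^n" using rtrancl_imp_relpow by blast
    have mm: "\<forall>b\<in>Qset s'. m \<le> ld s' b f" using qmin m_def by simp
    show ?thesis by (rule reach_load[OF mm qQ m_def[symmetric] n])
  qed
  have clos: "h \<in> R" if "g \<in> R" "v \<in> V" "cov s' v" "q v = g" "h \<in> avail E F s' v" for g v h
  proof -
    have "(g,h) \<in> Eq s' q" unfolding Eq_def using that by auto
    then show ?thesis using that(1) unfolding R_def by (auto intro: rtrancl_into_rtrancl)
  qed
  have vq: "valid s' q" using qQ unfolding Qset_def by auto
  define p where "p v = (if cov s' v \<and> q v \<in> R then q v else if cov s0 v \<and> a0 v \<noteq> f then a0 v else q v)" for v
  have vp: "valid s' p" unfolding valid_def
  proof (intro ballI impI)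
    fix v assume v: "v \<in> V" "cov s' v"
    show "p v \<in> avail E F s' v"
    proof (cases "cov s' v \<and> q v \<in> R")
      case True then show ?thesis using vq v unfolding p_def valid_def by auto
    next
      case False
      show ?thesis
      proof (cases "cov s0 v \<and> a0 v \<noteq> f")
        case True
        then have "a0 v \<in> avail E F s0 v" using va0 v unfolding valid_def by auto
        then show ?thesis using True False avail_upd[of "a0 v" f s0 x v] unfolding p_def s'def by auto
      next
        case False2: False
        then show ?thesis using False vq v unfolding p_def valid_def by auto
      qed
    qed
  qed
  have pR: "m \<le> ld s' p g" if "g \<in> R" for g
  proof -
    have "ld s' q g \<le> ld s' p g" unfolding ld_def
      by (rule card_mono) (use finV that in \<open>auto simp: p_def\<close>)
    then show ?thesis using Rload[OF that] by simp
  qed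
  have pnR: "ld s0 a0 g \<le> ld s' p g" if "g \<notin> R" for g
  proof -
    have gf: "g \<noteq> f" using that fR by auto
    have "{v\<in>V. cov s0 v \<and> a0 v = g} \<subseteq> {v\<in>V. cov s' v \<and> p v = g}"
    proof
      fix v assume "v \<in> {v\<in>V. cov s0 v \<and> a0 v = g}"
      then have v: "v \<in> V" "cov s0 v" "a0 v = g" by auto
      then have "g \<in> avail E F s0 v" using va0 unfolding valid_def by auto
      then have ga: "g \<in> avail E F s' v" using avail_upd[OF gf, of s0 x v] s'def by simp
      then have cv: "cov s' v" unfolding cov_def by auto
      have "q v \<notin> R" using clos[of "q v" v g] v ga cv that by auto
      then show "v \<in> {v\<in>V. cov s' v \<and> p v = g}" using v cv gf unfolding p_def by auto
    qed
    then show ?thesis unfolding ld_def by (rule card_mono[rotated]) (use finV in auto)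
  qed
  have tm: "min (ld s0 a0 g) j \<le> min (ld s' p g) j" if "j \<le> m" for g j
    using pR[of g] pnR[of g] that by (cases "g \<in> R") auto
  have T1: "\<forall>j\<le>m. Tv F (ld s0 a0) j \<le> Tv F (ld s' p) j"
    unfolding Tv_def by (auto intro!: sum_mono tm)
  have T2: "Tv F (ld s0 a0) m < Tv F (ld s' p) m"
    unfolding Tv_def
  proof (rule sum_strict_mono_ex1[OF finF])
    show "\<forall>g\<in>F. min (ld s0 a0 g) m \<le> min (ld s' p g) m" using tm by auto
    show "\<exists>g\<in>F. min (ld s0 a0 g) m < min (ld s' p g) m"
      using fF lm pR[OF fR] by (intro bexI[of _ f]) auto
  qed
  have "m < Suc (card V)" using ld_le[of s' q f] m_def by simp
  then have "key s0 a0 < key s' p" unfolding key_def by (rule list_less_by_dom) (use T1 T2 in auto)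
  moreover have "key s' p \<le> key s0 a0" by (rule glob[OF s'F vp])
  ultimately show False by simp
qed

end



theorem mainTheorem1:
  fixes V :: "'v set" and E :: "('v \<times> 'v) set" and F :: "'f set" and U :: "'f \<Rightarrow> 'v set"
  assumes "finite V" and "E \<subseteq> V \<times> V" and "finite F"
    and "\<forall>f\<in>F. U f \<noteq> {} \<and> U f \<subseteq> V"
  shows "\<exists>s \<sigma>. is_SPE V E F U (\<lambda>_. 1) s \<sigma> \<and> pure_full_profile V F U \<sigma>"
proof -
  interpret G: game V E F U using assms(1,3) by unfold_locales
  define s00 where "s00 = (\<lambda>f. if f \<in> F then SOME x. x \<in> U f else undefined)"
  have s00F: "s00 \<in> FPPs F U" unfolding FPPs_def s00_def using assms(4)
    by (auto simp: PiE_def extensional_def some_in_eq)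
  define Kall where "Kall = {G.key s a | s a. s \<in> FPPs F U \<and> G.valid s a}"
  have Kfin: "finite Kall" unfolding Kall_def by (rule G.finite_keys)
  obtain a00 where "G.valid s00 a00" using G.valid_ex by blast
  then have Kne: "Kall \<noteq> {}" unfolding Kall_def using s00F by auto
  have "Max Kall \<in> Kall" using Kfin Kne by (rule Max_in)
  then have "\<exists>s a. Max Kall = G.key s a \<and> s \<in> FPPs F U \<and> G.valid s a"
    by (simp only: Kall_def mem_Collect_eq)
  then obtain s0 a0 where s0F: "s0 \<in> FPPs F U" and va0: "G.valid s0 a0" and km: "G.key s0 a0 = Max Kall"
    by metis
  have glob: "G.key s b \<le> G.key s0 a0" if "s \<in> FPPs F U" "G.valid s b" for s b
    unfolding km using Kfin that by (intro Max_ge) (auto simp: Kall_def)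
  have eq0: "G.eqp s0 a0" using va0 glob s0F by (intro G.max_is_eqp) auto
  define pick where "pick s g = (SOME a. a \<in> G.Qset s \<and> (\<forall>b\<in>G.Qset s. G.ld s a g \<le> G.ld s b g))" for s g
  have pick: "pick s g \<in> G.Qset s \<and> (\<forall>b\<in>G.Qset s. G.ld s (pick s g) g \<le> G.ld s b g)" for s g
  proof -
    obtain a where "a \<in> G.Qset s" using G.Qset_ne by blast
    then have "\<exists>a. a \<in> G.Qset s \<and> (\<forall>b. b \<in> G.Qset s \<longrightarrow> G.ld s a g \<le> G.ld s b g)"
      by (rule ex_has_least_nat[where P="\<lambda>a. a \<in> G.Qset s" and m="\<lambda>a. G.ld s a g"])
    then have "\<exists>a. a \<in> G.Qset s \<and> (\<forall>b\<in>G.Qset s. G.ld s a g \<le> G.ld s b g)" by blast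
    then show ?thesis unfolding pick_def by (rule someI_ex)
  qed
  define \<sigma> where "\<sigma> s' = (if s' = s0 then G.sig s0 a0 else G.sig s' (pick s' (SOME g. g \<in> F \<and> s' = s0(g := s' g))))" for s'
  have \<sigma>eq: "\<exists>a. G.eqp s' a \<and> \<sigma> s' = G.sig s' a" for s'
  proof (cases "s' = s0")
    case True then show ?thesis using eq0 unfolding \<sigma>_def by auto
  next
    case False
    let ?a = "pick s' (SOME g. g \<in> F \<and> s' = s0(g := s' g))"
    have "G.eqp s' ?a" using pick G.Qset_eqp by blast
    then show ?thesis using False unfolding \<sigma>_def by auto
  qed
  have dev: "\<not> load V (\<lambda>_. 1) (\<sigma> (s0(f := x))) f > load V (\<lambda>_. 1) (\<sigma> s0) f" if f: "f \<in> F" "x \<in> U f" for f x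
  proof (cases "s0(f := x) = s0")
    case True then show ?thesis by simp
  next
    case False
    define s' where "s' = s0(f := x)"
    have s'F: "s' \<in> FPPs F U" unfolding s'_def using s0F f unfolding FPPs_def
      by (metis PiE_fun_upd insert_absorb)
    have sel: "(SOME g. g \<in> F \<and> s' = s0(g := s' g)) = f"
    proof (rule some_equality)
      show "f \<in> F \<and> s' = s0(f := s' f)" using f unfolding s'_def by simp
    next
      fix g assume g: "g \<in> F \<and> s' = s0(g := s' g)"
      show "g = f"
      proof (rule ccontr)
        assume "g \<noteq> f"
        then have "s' f = s0 f" using g by (metis fun_upd_other)
        then have "x = s0 f" unfolding s'_def by simp
        then show False using False by simp
      qed
    qed
    have "\<sigma> s' = G.sig s' (pick s' f)" unfolding \<sigma>_def using False sel s'_def by simp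
    then have l1: "load V (\<lambda>_. 1) (\<sigma> s') f = real (G.ld s' (pick s' f) f)" by (simp add: G.load_sig)
    have l0: "load V (\<lambda>_. 1) (\<sigma> s0) f = real (G.ld s0 a0 f)" unfolding \<sigma>_def by (simp add: G.load_sig)
    have "G.ld s' (pick s' f) f \<le> G.ld s0 a0 f"
      by (rule G.dev_ok[OF glob va0 f(1) s'_def s'F]) (use pick in auto)
    then show ?thesis using l1 l0 s'_def by simp
  qed
  have "is_SPE V E F U (\<lambda>_. 1) s0 \<sigma>"
    unfolding is_SPE_def full_client_eq_def
  proof (intro conjI s0F ballI)
    fix s' assume "s' \<in> FPPs F U"
    obtain a where "G.eqp s' a" "\<sigma> s' = G.sig s' a" using \<sigma>eq by blast
    then show "client_eq V E F (\<lambda>_. 1) s' (\<sigma> s')" using G.eqp_client_eq by simp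
  next
    fix f x assume "f \<in> F" "x \<in> U f"
    then show "\<not> load V (\<lambda>_. 1) (\<sigma> (s0(f := x))) f > load V (\<lambda>_. 1) (\<sigma> s0) f" by (rule dev)
  qed
  moreover have "pure_full_profile V F U \<sigma>"
    unfolding pure_full_profile_def
  proof (intro ballI)
    fix s' v g
    obtain a where "\<sigma> s' = G.sig s' a" using \<sigma>eq by blast
    then show "\<sigma> s' v g \<in> {0, 1}" by (simp add: G.sig_def)
  qed
  ultimately show ?thesis by blast
qed



end
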